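(* If $n$ is a positive integer, then \[ \sum_{k=1}^\infty\frac{\zeta(2k)}{k(k+n)} = -\frac{1}{2n^2}+\frac{\ln(2\pi)}{n}-2(2n-1)!\sum_{j=1}^{n-1}\frac{(-1)^j\zeta(2j+1)}{(2\pi)^{2j}(2n-2j)!}, \] \[ \sum_{k=1}^\infty\frac{\zeta(2k)}{k(2k+2n-1)} = -\frac{1}{(2n-1)^2}+\frac{\ln(2\pi)}{2n-1}-(2n-2)!\sum_{j=1}^{n-1}\frac{(-1)^j\zeta(2j+1)}{(2\pi)^{2j}(2n-2j-1)!}. \]
   Context: $\zeta$ denotes the Riemann zeta function; empty sums equal $0$. *)

theory Defs
  imports "HOL-Analysis.Analysis"
begin

text \<open>Riemann zeta function on the half-line s > 1, given by its Dirichlet series.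
  The statement only uses zeta at integers s \<ge> 2, where this is the standard definition.\<close>
definition zeta :: "real \<Rightarrow> real" where
  "zeta s = (\<Sum>m. 1 / (real (Suc m)) powr s)"

end

theory Submission
  imports Defs "HOL-Real_Asymp.Real_Asymp"
begin
lemma zeta_nat_sums:
  assumes "j \<ge> 2"
  shows "(\<lambda>i. 1 / real (Suc i) ^ j) sums zeta (real j)"
proof -
  have "summable (\<lambda>n. inverse (real n ^ j))" by (rule inverse_power_summable) (use assms in auto)
  then have s: "summable (\<lambda>i. 1 / real (Suc i) ^ j)"
    by (subst (asm) summable_Suc_iff[symmetric]) (simp add: inverse_eq_divide)
  have "zeta (real j) = (\<Sum>i. 1 / real (Suc i) ^ j)"
    unfolding zeta_def by (simp add: powr_realpow)
  with s show ?thesis by (simp add: sums_iff)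
qed

lemma zeta_nat_bounds:
  assumes "j \<ge> 2"
  shows "0 \<le> zeta (real j)" "zeta (real j) \<le> zeta 2"
proof -
  show "0 \<le> zeta (real j)"
    by (rule sums_le[OF _ sums_zero zeta_nat_sums[OF assms]]) auto
  have "(\<lambda>i. 1 / real (Suc i) ^ 2) sums zeta (real (2::nat))" by (rule zeta_nat_sums) auto
  then have z2: "(\<lambda>i. 1 / real (Suc i) ^ 2) sums zeta 2" by simp
  show "zeta (real j) \<le> zeta 2"
  proof (rule sums_le[OF _ zeta_nat_sums[OF assms] z2])
    fix i
    have "real (Suc i) ^ 2 \<le> real (Suc i) ^ j"
      by (rule power_increasing) (use assms in auto)
    then show "1 / real (Suc i) ^ j \<le> 1 / real (Suc i) ^ 2"
      by (intro divide_left_mono) auto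
  qed
qed

lemma sums_swap_nonneg:
  fixes f :: "nat \<Rightarrow> nat \<Rightarrow> real"
  assumes nn: "\<And>m k. f m k \<ge> 0" and fm: "\<And>m. (\<lambda>k. f m k) sums g m" and gS: "g sums S"
    and fk: "\<And>k. (\<lambda>m. f m k) sums h k"
  shows "h sums S"
proof -
  have g0: "g m \<ge> 0" for m
    by (rule sums_le[OF _ sums_zero fm]) (use nn in auto)
  have G: "(g has_sum S) UNIV" by (rule sums_nonneg_imp_has_sum[OF gS g0])
  have FM: "((\<lambda>k. f m k) has_sum g m) UNIV" for m by (rule sums_nonneg_imp_has_sum[OF fm nn])
  have FK: "((\<lambda>m. f m k) has_sum h k) UNIV" for k by (rule sums_nonneg_imp_has_sum[OF fk nn])
  have sm: "(\<lambda>(m,k). f m k) summable_on Sigma UNIV (\<lambda>_. UNIV)"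
    by (rule summable_on_SigmaI[where g=g]) (use FM G nn in \<open>auto simp: has_sum_imp_summable\<close>)
  have hs: "((\<lambda>(m,k). f m k) has_sum S) (Sigma UNIV (\<lambda>_. UNIV))"
    by (rule has_sum_SigmaI[where g=g]) (use FM G sm in auto)
  then have "((\<lambda>(x,y). (\<lambda>(m,k). f m k) (y,x)) has_sum S) (UNIV \<times> UNIV)"
    using has_sum_swap by blast
  then have hs2: "((\<lambda>(k,m). f m k) has_sum S) (Sigma UNIV (\<lambda>_. UNIV))"
    by (simp add: case_prod_unfold)
  have "(h has_sum S) UNIV"
    by (rule has_sum_SigmaD[OF hs2]) (use FK in auto)
  then show ?thesis by (rule has_sum_imp_sums)
qed

lemma log_series_pos:
  fixes t :: real
  assumes "0 \<le> t" "t < 1"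
  shows "(\<lambda>i. t ^ Suc i / real (Suc i)) sums (- ln (1 - t))"
proof -
  have "(\<lambda>n. - ((-(-t))^n) / of_nat n) sums ln (1 + (-t))"
    by (rule ln_series') (use assms in auto)
  then have "(\<lambda>n. - (t^n / real n)) sums ln (1 - t)" by simp
  then have "(\<lambda>n. t^n / real n) sums (- ln (1 - t))"
    using sums_minus by fastforce
  then show ?thesis
    by (subst sums_Suc_iff) simp
qed

lemma F_sums:
  fixes y :: real
  assumes y: "0 < y" "y < 1"
  shows "(\<lambda>i. zeta (real (2 * Suc i)) * y ^ (2 * Suc i) / real (Suc i))
           sums (ln (2 * pi * y) - ln (2 * sin (pi * y)))"
proof -
  have sinpos: "sin (pi * y) > 0" using y by (intro sin_gt_zero) auto
  have fac_pos: "1 - y\<^sup>2 / (real k)\<^sup>2 > 0" if "k \<ge> 1" for k :: nat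
  proof -
    have "y^2 < 1" using y by (simp add: power_less_one_iff abs_less_iff)
    also have "1 \<le> (real k)^2" using that by simp
    finally have "y^2 < (real k)^2" .
    moreover have "(real k)^2 > 0" using that by simp
    ultimately show ?thesis by (simp add: field_simps)
  qed
  have "(\<lambda>N. \<Prod>k=1..N. 1 - y\<^sup>2 / (real k)\<^sup>2) \<longlonglongrightarrow> sin (pi * y) / (pi * y)"
    using sin_product_formula_real'[of y] y by simp
  then have "(\<lambda>N. ln (\<Prod>k=1..N. 1 - y\<^sup>2 / (real k)\<^sup>2)) \<longlonglongrightarrow> ln (sin (pi * y) / (pi * y))"
    by (rule tendsto_ln) (use sinpos y in auto)
  also have "(\<lambda>N. ln (\<Prod>k=1..N. 1 - y\<^sup>2 / (real k)\<^sup>2)) = (\<lambda>N. \<Sum>k<N. ln (1 - y\<^sup>2 / (real (Suc k))\<^sup>2))"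
  proof
    fix N
    have "ln (\<Prod>k=1..N. 1 - y\<^sup>2 / (real k)\<^sup>2) = (\<Sum>k=1..N. ln (1 - y\<^sup>2 / (real k)\<^sup>2))"
      by (rule ln_prod) (use fac_pos in force)+
    also have "\<dots> = (\<Sum>k<N. ln (1 - y\<^sup>2 / (real (Suc k))\<^sup>2))"
      by (subst sum_bounds_lt_plus1[symmetric]) simp
    finally show "ln (\<Prod>k=1..N. 1 - y\<^sup>2 / (real k)\<^sup>2) = (\<Sum>k<N. ln (1 - y\<^sup>2 / (real (Suc k))\<^sup>2))" .
  qed
  finally have P: "(\<lambda>m. ln (1 - y\<^sup>2 / (real (Suc m))\<^sup>2)) sums ln (sin (pi * y) / (pi * y))"
    by (simp add: sums_def)
  then have P': "(\<lambda>m. - ln (1 - y\<^sup>2 / (real (Suc m))\<^sup>2)) sums (- ln (sin (pi * y) / (pi * y)))"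
    by (rule sums_minus)
  define f where "f m i = (y\<^sup>2 / (real (Suc m))\<^sup>2) ^ Suc i / real (Suc i)" for m i
  have fnn: "f m i \<ge> 0" for m i unfolding f_def by simp
  have fm: "(\<lambda>i. f m i) sums (- ln (1 - y\<^sup>2 / (real (Suc m))\<^sup>2))" for m
    unfolding f_def
  proof (rule log_series_pos)
    show "y\<^sup>2 / (real (Suc m))\<^sup>2 < 1" using fac_pos[of "Suc m"] by simp
  qed simp
  have fk: "(\<lambda>m. f m i) sums (zeta (real (2 * Suc i)) * y ^ (2 * Suc i) / real (Suc i))" for i
  proof -
    have "(\<lambda>m. 1 / real (Suc m) ^ (2 * Suc i) * (y ^ (2 * Suc i) / real (Suc i)))
            sums (zeta (real (2 * Suc i)) * (y ^ (2 * Suc i) / real (Suc i)))"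
      by (rule sums_mult2, rule zeta_nat_sums) simp
    moreover have "f m i = 1 / real (Suc m) ^ (2 * Suc i) * (y ^ (2 * Suc i) / real (Suc i))" for m
    proof -
      have "(y\<^sup>2 / (real (Suc m))\<^sup>2) ^ Suc i = y ^ (2 * Suc i) / real (Suc m) ^ (2 * Suc i)"
        by (simp only: power_divide power_mult)
      then show ?thesis unfolding f_def by simp
    qed
    ultimately show ?thesis by simp
  qed
  have "(\<lambda>i. zeta (real (2 * Suc i)) * y ^ (2 * Suc i) / real (Suc i)) sums (- ln (sin (pi * y) / (pi * y)))"
    by (rule sums_swap_nonneg[OF fnn fm P' fk])
  moreover have "- ln (sin (pi * y) / (pi * y)) = ln (2 * pi * y) - ln (2 * sin (pi * y))"
    using sinpos y by (simp add: ln_div ln_mult)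
  ultimately show ?thesis by simp
qed

definition Sn :: "nat \<Rightarrow> real \<Rightarrow> real" where
  "Sn j y = (\<Sum>i. sin (2 * pi * real (Suc i) * y) / real (Suc i) ^ j)"
definition Cs :: "nat \<Rightarrow> real \<Rightarrow> real" where
  "Cs j y = (\<Sum>i. cos (2 * pi * real (Suc i) * y) / real (Suc i) ^ j)"

lemma summable_inv_pow: "j \<ge> 2 \<Longrightarrow> summable (\<lambda>i. 1 / real (Suc i) ^ j)"
  using zeta_nat_sums sums_summable by blast

lemma ul_Sn: "j \<ge> 2 \<Longrightarrow> uniform_limit UNIV (\<lambda>n x. \<Sum>i<n. sin (2 * pi * real (Suc i) * x) / real (Suc i) ^ j) (Sn j) sequentially"
  unfolding Sn_def[abs_def]
  by (rule Weierstrass_m_test[OF _ summable_inv_pow]) (auto simp: abs_sin_le_one divide_right_mono)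

lemma ul_Cs: "j \<ge> 2 \<Longrightarrow> uniform_limit UNIV (\<lambda>n x. \<Sum>i<n. cos (2 * pi * real (Suc i) * x) / real (Suc i) ^ j) (Cs j) sequentially"
  unfolding Cs_def[abs_def]
  by (rule Weierstrass_m_test[OF _ summable_inv_pow]) (auto simp: abs_cos_le_one divide_right_mono)

lemma cont_Sn: "j \<ge> 2 \<Longrightarrow> continuous_on UNIV (Sn j)"
  apply (rule uniform_limit_theorem[OF _ ul_Sn])
  apply (intro always_eventually allI continuous_intros)
  by auto

lemma cont_Cs: "j \<ge> 2 \<Longrightarrow> continuous_on UNIV (Cs j)"
  apply (rule uniform_limit_theorem[OF _ ul_Cs])
  apply (intro always_eventually allI continuous_intros)
  by auto

lemma Sn_0: "Sn j 0 = 0" unfolding Sn_def by simp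

lemma Sn_1: "Sn j 1 = 0"
proof -
  have "sin (2 * pi * real (Suc i)) = 0" for i
    using sin_2npi[of "Suc i"] by (simp add: mult_ac)
  then show ?thesis unfolding Sn_def by simp
qed

lemma Cs_0: "j \<ge> 2 \<Longrightarrow> Cs j 0 = zeta (real j)"
  unfolding Cs_def using zeta_nat_sums[of j] by (simp add: sums_iff)

lemma Cs_1: "j \<ge> 2 \<Longrightarrow> Cs j 1 = zeta (real j)"
proof -
  assume j: "j \<ge> 2"
  have "cos (2 * pi * real (Suc i)) = 1" for i
    using cos_2npi[of "Suc i"] by (simp add: mult_ac)
  then show ?thesis unfolding Cs_def using zeta_nat_sums[OF j] by (simp add: sums_iff)
qed

lemma deriv_Sn:
  assumes "j \<ge> 3"
  shows "(Sn j has_real_derivative (2 * pi * Cs (j - 1) y)) (at y)"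
proof -
  define f where "f i x = sin (2 * pi * real (Suc i) * x) / real (Suc i) ^ j" for i x
  define f' where "f' i x = 2 * pi * (cos (2 * pi * real (Suc i) * x) / real (Suc i) ^ (j - 1))" for i x
  have der: "(f i has_field_derivative f' i x) (at x within UNIV)" for i x
  proof -
    define s where "s = real (Suc i)"
    have s0: "s > 0" unfolding s_def by simp
    have "s ^ j = s * s ^ (j - 1)"
      using assms by (simp add: power_eq_if)
    then have e: "s / s ^ j = 1 / s ^ (j - 1)" using s0 by simp
    have "((\<lambda>x. sin (2 * pi * s * x) / s ^ j) has_real_derivative (cos (2 * pi * s * x) * (2 * pi * s) / s ^ j)) (at x)"
      using s0 by (auto intro!: derivative_eq_intros)
    also have "cos (2 * pi * s * x) * (2 * pi * s) / s ^ j = 2 * pi * (cos (2 * pi * s * x) * (s / s ^ j))"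
      by (simp add: algebra_simps)
    also have "\<dots> = 2 * pi * (cos (2 * pi * s * x) * (1 / s ^ (j - 1)))" by (simp only: e)
    also have "\<dots> = f' i x" unfolding f'_def s_def by simp
    also have "(\<lambda>x. sin (2 * pi * s * x) / s ^ j) = f i" unfolding f_def s_def by (rule ext) simp
    finally show ?thesis by simp
  qed
  have sM: "summable (\<lambda>i. 2 * pi * (1 / real (Suc i) ^ (j - 1)))"
    by (intro summable_mult summable_inv_pow) (use assms in auto)
  have uc: "uniformly_convergent_on UNIV (\<lambda>n x. \<Sum>i<n. f' i x)"
    unfolding f'_def
  proof (rule Weierstrass_m_test'[OF _ sM])
    fix n x
    have "\<bar>cos (2 * pi * real (Suc n) * x)\<bar> / real (Suc n) ^ (j - 1) \<le> 1 / real (Suc n) ^ (j - 1)"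
      by (rule divide_right_mono) (auto simp: abs_cos_le_one)
    then have "2 * pi * (\<bar>cos (2 * pi * real (Suc n) * x)\<bar> / real (Suc n) ^ (j - 1)) \<le> 2 * pi * (1 / real (Suc n) ^ (j - 1))"
      by (intro mult_left_mono) auto
    then show "norm (2 * pi * (cos (2 * pi * real (Suc n) * x) / real (Suc n) ^ (j - 1))) \<le> 2 * pi * (1 / real (Suc n) ^ (j - 1))"
      by (simp add: abs_mult abs_divide)
  qed
  have sm: "summable (\<lambda>n. f n 0)" unfolding f_def by simp
  have "((\<lambda>x. \<Sum>n. f n x) has_field_derivative (\<Sum>n. f' n x)) (at x)" for x
    by (rule has_field_derivative_series'(2)[OF convex_UNIV der uc _ sm]) auto
  moreover have "(\<lambda>x. \<Sum>n. f n x) = Sn j" unfolding f_def Sn_def by (rule ext) simp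
  moreover have "(\<Sum>n. f' n y) = 2 * pi * Cs (j - 1) y"
  proof -
    have "summable (\<lambda>i. cos (2 * pi * real (Suc i) * y) / real (Suc i) ^ (j - 1))"
      by (rule summable_comparison_test[OF _ summable_inv_pow[of "j-1"]])
         (use assms in \<open>auto simp: abs_cos_le_one divide_right_mono\<close>)
    then show ?thesis unfolding f'_def Cs_def by (rule suminf_mult)
  qed
  ultimately show ?thesis by metis
qed

lemma deriv_Cs:
  assumes "j \<ge> 3"
  shows "(Cs j has_real_derivative (- 2 * pi * Sn (j - 1) y)) (at y)"
proof -
  define f where "f i x = cos (2 * pi * real (Suc i) * x) / real (Suc i) ^ j" for i x
  define f' where "f' i x = (- 2 * pi) * (sin (2 * pi * real (Suc i) * x) / real (Suc i) ^ (j - 1))" for i x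
  have der: "(f i has_field_derivative f' i x) (at x within UNIV)" for i x
  proof -
    define s where "s = real (Suc i)"
    have s0: "s > 0" unfolding s_def by simp
    have "s ^ j = s * s ^ (j - 1)"
      using assms by (simp add: power_eq_if)
    then have e: "s / s ^ j = 1 / s ^ (j - 1)" using s0 by simp
    have "((\<lambda>x. cos (2 * pi * s * x) / s ^ j) has_real_derivative (- sin (2 * pi * s * x) * (2 * pi * s) / s ^ j)) (at x)"
      using s0 by (auto intro!: derivative_eq_intros)
    also have "- sin (2 * pi * s * x) * (2 * pi * s) / s ^ j = (- 2 * pi) * (sin (2 * pi * s * x) * (s / s ^ j))"
      by (simp add: algebra_simps)
    also have "\<dots> = (- 2 * pi) * (sin (2 * pi * s * x) * (1 / s ^ (j - 1)))" by (simp only: e)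
    also have "\<dots> = f' i x" unfolding f'_def s_def by simp
    also have "(\<lambda>x. cos (2 * pi * s * x) / s ^ j) = f i" unfolding f_def s_def by (rule ext) simp
    finally show ?thesis by simp
  qed
  have sM: "summable (\<lambda>i. 2 * pi * (1 / real (Suc i) ^ (j - 1)))"
    by (intro summable_mult summable_inv_pow) (use assms in auto)
  have uc: "uniformly_convergent_on UNIV (\<lambda>n x. \<Sum>i<n. f' i x)"
    unfolding f'_def
  proof (rule Weierstrass_m_test'[OF _ sM])
    fix n x
    have "\<bar>sin (2 * pi * real (Suc n) * x)\<bar> / real (Suc n) ^ (j - 1) \<le> 1 / real (Suc n) ^ (j - 1)"
      by (rule divide_right_mono) (auto simp: abs_sin_le_one)
    then have "2 * pi * (\<bar>sin (2 * pi * real (Suc n) * x)\<bar> / real (Suc n) ^ (j - 1)) \<le> 2 * pi * (1 / real (Suc n) ^ (j - 1))"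
      by (intro mult_left_mono) auto
    then show "norm ((- 2 * pi) * (sin (2 * pi * real (Suc n) * x) / real (Suc n) ^ (j - 1))) \<le> 2 * pi * (1 / real (Suc n) ^ (j - 1))"
      by (simp add: abs_mult abs_divide)
  qed
  have sm: "summable (\<lambda>n. f n 0)" unfolding f_def using summable_inv_pow[of j] assms by simp
  have "((\<lambda>x. \<Sum>n. f n x) has_field_derivative (\<Sum>n. f' n x)) (at x)" for x
    by (rule has_field_derivative_series'(2)[OF convex_UNIV der uc _ sm]) auto
  moreover have "(\<lambda>x. \<Sum>n. f n x) = Cs j" unfolding f_def Cs_def by (rule ext) simp
  moreover have "(\<Sum>n. f' n y) = - 2 * pi * Sn (j - 1) y"
  proof -
    have "summable (\<lambda>i. sin (2 * pi * real (Suc i) * y) / real (Suc i) ^ (j - 1))"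
      by (rule summable_comparison_test[OF _ summable_inv_pow[of "j-1"]])
         (use assms in \<open>auto simp: abs_sin_le_one divide_right_mono\<close>)
    then show ?thesis unfolding f'_def Sn_def by (rule suminf_mult)
  qed
  ultimately show ?thesis by metis
qed

lemma cos_log_series:
  fixes r t :: real
  assumes r: "0 \<le> r" "r < 1"
  shows "(\<lambda>i. r ^ Suc i * cos (real (Suc i) * t) / real (Suc i)) sums (- ln (1 - 2 * r * cos t + r\<^sup>2) / 2)"
proof -
  define z where "z = rcis r t"
  have nz: "norm z = r" using r unfolding z_def by simp
  have "(\<lambda>n. - ((-(-z))^n) / of_nat n) sums ln (1 + (-z))"
    by (rule Ln_series') (use nz r in simp)
  then have "(\<lambda>n. - (z^n / of_nat n)) sums ln (1 - z)" by simp
  then have "(\<lambda>n. z^n / of_nat n) sums (- ln (1 - z))"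
    using sums_minus by fastforce
  then have S1: "(\<lambda>n. Re (z^n / of_nat n)) sums Re (- ln (1 - z))"
    by (rule sums_Re)
  have E1: "(\<lambda>n. Re (z^n / of_nat n)) = (\<lambda>n. r ^ n * cos (real n * t) / real n)"
    by (rule ext) (simp add: z_def DeMoivre2)
  have E2: "Re (- ln (1 - z)) = - ln (1 - 2 * r * cos t + r\<^sup>2) / 2"
  proof -
    have z1: "1 - z \<noteq> 0" using nz r by auto
    have "(norm (1 - z))\<^sup>2 = (1 - r * cos t)\<^sup>2 + (r * sin t)\<^sup>2"
      unfolding cmod_power2 z_def by simp
    also have "(r * sin t)\<^sup>2 = r\<^sup>2 * (1 - (cos t)\<^sup>2)" by (simp add: power_mult_distrib sin_squared_eq)
    also have "(1 - r * cos t)\<^sup>2 + r\<^sup>2 * (1 - (cos t)\<^sup>2) = 1 - 2 * r * cos t + r\<^sup>2"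
      by (simp add: power2_eq_square algebra_simps)
    finally have e: "(norm (1 - z))\<^sup>2 = 1 - 2 * r * cos t + r\<^sup>2" .
    have "ln ((norm (1 - z))\<^sup>2) = 2 * ln (norm (1 - z))"
      using z1 by (simp add: ln_realpow)
    then have "ln (norm (1 - z)) = ln (1 - 2 * r * cos t + r\<^sup>2) / 2" using e by simp
    then show ?thesis using z1 by simp
  qed
  from S1 have "(\<lambda>n. r ^ n * cos (real n * t) / real n) sums (- ln (1 - 2 * r * cos t + r\<^sup>2) / 2)"
    unfolding E1 E2 .
  then show ?thesis by (subst sums_Suc_iff) simp
qed

definition fr :: "real \<Rightarrow> real \<Rightarrow> real" where
  "fr r y = (\<Sum>i. r ^ Suc i * (sin (2 * pi * real (Suc i) * y) / real (Suc i) ^ 2))"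

lemma deriv_fr:
  assumes r: "0 \<le> r" "r < 1"
  shows "(fr r has_real_derivative (- pi * ln (1 - 2 * r * cos (2 * pi * y) + r\<^sup>2))) (at y)"
proof -
  define f where "f i x = r ^ Suc i * (sin (2 * pi * real (Suc i) * x) / real (Suc i) ^ 2)" for i x
  define f' where "f' i x = 2 * pi * (r ^ Suc i * cos (real (Suc i) * (2 * pi * x)) / real (Suc i))" for i x
  have der: "(f i has_field_derivative f' i x) (at x within UNIV)" for i x
  proof -
    define s where "s = real (Suc i)"
    have s0: "s > 0" unfolding s_def by simp
    define k where "k = r ^ Suc i / s ^ 2"
    have "((\<lambda>x. k * sin (2 * pi * s * x)) has_real_derivative
            k * (cos (2 * pi * s * x) * (2 * pi * s))) (at x)"
      by (auto intro!: derivative_eq_intros)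
    also have "k * (cos (2 * pi * s * x) * (2 * pi * s)) = f' i x"
      unfolding f'_def s_def[symmetric] k_def using s0 by (simp add: power2_eq_square field_simps mult_ac)
    also have "(\<lambda>x. k * sin (2 * pi * s * x)) = f i"
      unfolding f_def s_def k_def by (rule ext) simp
    finally show ?thesis by simp
  qed
  have sM: "summable (\<lambda>i. 2 * pi * r ^ Suc i)"
    using r by (intro summable_mult summable_ignore_initial_segment[where k=1, simplified] summable_geometric) auto
  have uc: "uniformly_convergent_on UNIV (\<lambda>n x. \<Sum>i<n. f' i x)"
  proof (rule Weierstrass_m_test'[OF _ sM])
    fix n x
    have "r ^ Suc n * \<bar>cos (real (Suc n) * (2 * pi * x))\<bar> / real (Suc n) \<le> r ^ Suc n * 1 / 1"
      using r by (intro frac_le mult_left_mono) (auto simp: abs_cos_le_one)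
    then have "2 * pi * (r ^ Suc n * \<bar>cos (real (Suc n) * (2 * pi * x))\<bar> / real (Suc n)) \<le> 2 * pi * r ^ Suc n"
      by (intro mult_left_mono) auto
    then show "norm (f' n x) \<le> 2 * pi * r ^ Suc n"
      unfolding f'_def using r by (simp add: abs_mult abs_divide)
  qed
  have sm: "summable (\<lambda>n. f n 0)" unfolding f_def by simp
  have "((\<lambda>x. \<Sum>n. f n x) has_field_derivative (\<Sum>n. f' n x)) (at x)" for x
    by (rule has_field_derivative_series'(2)[OF convex_UNIV der uc _ sm]) auto
  moreover have "(\<lambda>x. \<Sum>n. f n x) = fr r" unfolding f_def fr_def by (rule ext) simp
  moreover have "(\<Sum>n. f' n y) = - pi * ln (1 - 2 * r * cos (2 * pi * y) + r\<^sup>2)"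
  proof -
    have "(\<lambda>n. f' n y) sums (2 * pi * (- ln (1 - 2 * r * cos (2 * pi * y) + r\<^sup>2) / 2))"
      unfolding f'_def by (rule sums_mult, rule cos_log_series[OF r])
    then show ?thesis by (simp add: sums_iff)
  qed
  ultimately show ?thesis by metis
qed

lemma fr_cont: "continuous_on {0..1} (\<lambda>r. fr r y)"
proof -
  have "uniform_limit {0..1} (\<lambda>n r. \<Sum>i<n. r ^ Suc i * (sin (2 * pi * real (Suc i) * y) / real (Suc i) ^ 2)) (\<lambda>r. fr r y) sequentially"
    unfolding fr_def
  proof (rule Weierstrass_m_test[OF _ summable_inv_pow[of 2]])
    fix n and r :: real assume "r \<in> {0..1}"
    then have r: "0 \<le> r" "r \<le> 1" by auto
    have "r ^ Suc n * (\<bar>sin (2 * pi * real (Suc n) * y)\<bar> / real (Suc n) ^ 2) \<le> 1 * (1 / real (Suc n) ^ 2)"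
      using r by (intro mult_mono divide_right_mono power_le_one) (auto simp: abs_sin_le_one)
    then show "norm (r ^ Suc n * (sin (2 * pi * real (Suc n) * y) / real (Suc n) ^ 2)) \<le> 1 / real (Suc n) ^ 2"
      using r by (simp add: abs_mult abs_divide)
  qed simp
  note ul = this
  show ?thesis
    apply (rule uniform_limit_theorem[OF _ ul])
    apply (intro always_eventually allI continuous_intros)
    by auto
qed

lemma fr_1: "fr 1 y = Sn 2 y" unfolding fr_def Sn_def by simp

lemma ln_diff_bound:
  fixes a b :: real
  assumes "a > 0" "b > 0"
  shows "\<bar>ln a - ln b\<bar> \<le> \<bar>a - b\<bar> / min a b"
proof -
  have main: "ln v - ln u \<le> (v - u) / u" if "0 < u" "u \<le> v" for u v :: real
  proof -
    have "ln v - ln u = ln (v / u)" using that by (simp add: ln_div)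
    also have "\<dots> \<le> v / u - 1" using that by (intro ln_le_minus_one) auto
    also have "\<dots> = (v - u) / u" using that by (simp add: field_simps)
    finally show ?thesis .
  qed
  show ?thesis
  proof (cases "a \<le> b")
    case True
    then have "ln a \<le> ln b" using assms by simp
    then show ?thesis using main[of a b] True assms by (simp add: min_def)
  next
    case False
    then have "ln b \<le> ln a" using assms by simp
    then show ?thesis using main[of b a] False assms by (simp add: min_def)
  qed
qed

lemma deriv_Sn2:
  assumes y: "0 < y" "y < 1"
  shows "(Sn 2 has_real_derivative (- 2 * pi * ln (2 * sin (pi * y)))) (at y)"
proof -
  define a where "a = y / 2"
  define b where "b = (1 + y) / 2"
  define S where "S = {a..b}"
  have ab: "0 < a" "a < y" "y < b" "b < 1" using y unfolding a_def b_def by auto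
  have yS: "y \<in> S" using ab unfolding S_def by auto
  have S01: "x \<in> S \<Longrightarrow> 0 < x \<and> x < 1" for x using ab unfolding S_def by auto
  have "\<exists>x\<in>S. \<forall>z\<in>S. sin (pi * x) \<le> sin (pi * z)"
    unfolding S_def by (rule continuous_attains_inf) (use ab in \<open>auto intro!: continuous_intros\<close>)
  then obtain x0 where x0: "x0 \<in> S" "\<And>x. x \<in> S \<Longrightarrow> sin (pi * x0) \<le> sin (pi * x)"
    by blast
  define d0 where "d0 = sin (pi * x0)"
  have d0: "d0 > 0" unfolding d0_def using S01[OF x0(1)] by (intro sin_gt_zero) auto
  define B where "B x = 2 - 2 * cos (2 * pi * x)" for x
  have B_eq: "B x = 4 * (sin (pi * x))\<^sup>2" for x
    unfolding B_def using cos_double_sin[of "pi * x"] by (simp add: mult_ac)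
  define dl where "dl = 4 * d0\<^sup>2"
  have dl: "dl > 0" unfolding dl_def using d0 by simp
  have Bge: "B x \<ge> dl" if "x \<in> S" for x
  proof -
    have "d0 \<le> sin (pi * x)" using x0(2)[OF that] unfolding d0_def .
    then have "d0\<^sup>2 \<le> (sin (pi * x))\<^sup>2" using d0 by (intro power_mono) auto
    then show ?thesis unfolding B_eq dl_def by simp
  qed
  define G where "G x = - 2 * pi * ln (2 * sin (pi * x))" for x
  have G_eq: "G x = - pi * ln (B x)" if "x \<in> S" for x
  proof -
    have sp: "sin (pi * x) > 0" using S01[OF that] by (intro sin_gt_zero) auto
    have "B x = (2 * sin (pi * x))\<^sup>2" unfolding B_eq by (simp add: power2_eq_square)
    then have "ln (B x) = ln ((2 * sin (pi * x))\<^sup>2)" by simp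
    also have "\<dots> = 2 * ln (2 * sin (pi * x))" using sp by (subst ln_realpow) auto
    finally have "ln (B x) = 2 * ln (2 * sin (pi * x))" .
    then show ?thesis unfolding G_def by simp
  qed
  define rj where "rj n = 1 - 1 / (real n + 2)" for n
  have rj: "1/2 \<le> rj n" "rj n < 1" for n unfolding rj_def by (auto simp: field_simps)
  have rj0: "0 \<le> rj n" "rj n \<le> 1" for n using rj[of n] by auto
  have rj_lim: "rj \<longlonglongrightarrow> 1"
    unfolding rj_def by real_asymp
  define D where "D n x = - pi * ln (1 - 2 * rj n * cos (2 * pi * x) + (rj n)\<^sup>2)" for n x
  have bound: "\<bar>D n x - G x\<bar> \<le> 8 * pi / dl * (1 - rj n)" if "x \<in> S" for n x
  proof -
    define r where "r = rj n"
    define c where "c = cos (2 * pi * x)"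
    define A where "A = 1 - 2 * r * c + r\<^sup>2"
    have r: "1/2 \<le> r" "r < 1" unfolding r_def using rj by auto
    have c: "\<bar>c\<bar> \<le> 1" unfolding c_def by (rule abs_cos_le_one)
    have Bx: "B x = 2 - 2 * c" unfolding B_def c_def by simp
    have Bd: "B x \<ge> dl" by (rule Bge[OF that])
    have A_eq: "A = (1 - r)\<^sup>2 + r * B x" unfolding A_def Bx by (simp add: power2_eq_square algebra_simps)
    have "r * B x \<ge> B x / 2"
      using r Bd dl by (simp add: field_simps)
    then have AB: "A \<ge> B x / 2" unfolding A_eq by (smt (verit) zero_le_power2)
    have Bpos: "B x > 0" using Bd dl by simp
    have Apos: "A > 0" using AB Bpos by simp
    have minAB: "min A (B x) \<ge> dl / 2" using AB Bd dl by auto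
    have "A - B x = (1 - r) * (2 * c - 1 - r)" unfolding A_def Bx by (simp add: power2_eq_square algebra_simps)
    then have "\<bar>A - B x\<bar> = (1 - r) * \<bar>2 * c - 1 - r\<bar>" using r by (simp add: abs_mult)
    moreover have "\<bar>2 * c - 1 - r\<bar> \<le> 4" using r c by (auto simp: abs_le_iff)
    moreover have "(1 - r) * \<bar>2 * c - 1 - r\<bar> \<le> (1 - r) * 4"
      by (rule mult_left_mono) (use r calculation in auto)
    ultimately have AmB: "\<bar>A - B x\<bar> \<le> (1 - r) * 4" by simp
    have "\<bar>D n x - G x\<bar> = \<bar>pi * (ln (B x) - ln A)\<bar>"
      unfolding D_def G_eq[OF that] A_def r_def c_def by (simp add: algebra_simps)
    also have "\<dots> = pi * \<bar>ln A - ln (B x)\<bar>" by (simp add: abs_mult abs_minus_commute)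
    also have "\<dots> \<le> pi * (\<bar>A - B x\<bar> / min A (B x))"
      by (intro mult_left_mono ln_diff_bound Apos Bpos) auto
    also have "\<bar>A - B x\<bar> / min A (B x) \<le> ((1 - r) * 4) / (dl / 2)"
      using AmB minAB dl r by (intro frac_le) auto
    also have "pi * (((1 - r) * 4) / (dl / 2)) = 8 * pi / dl * (1 - r)"
      by (simp add: field_simps)
    finally show ?thesis unfolding r_def by simp
  qed
  have derf: "((fr (rj n)) has_derivative (*) (D n x)) (at x within S)" for n x
    using deriv_fr[of "rj n" x] rj[of n] unfolding D_def has_field_derivative_def
    by (auto intro: has_derivative_at_withinI)
  have nle: "\<forall>\<^sub>F n in sequentially. \<forall>x\<in>S. \<forall>h. norm (D n x * h - G x * h) \<le> e * norm h" if e: "e > 0" for e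
  proof -
    have "(\<lambda>n. 8 * pi / dl * (1 - rj n)) \<longlonglongrightarrow> 8 * pi / dl * (1 - 1)"
      by (intro tendsto_intros rj_lim)
    then have "\<forall>\<^sub>F n in sequentially. 8 * pi / dl * (1 - rj n) < e"
      using e by (auto simp: order_tendsto_iff)
    then show ?thesis
    proof eventually_elim
      case (elim n)
      show ?case
      proof (intro ballI allI)
        fix x h assume "x \<in> S"
        have "norm (D n x * h - G x * h) = \<bar>D n x - G x\<bar> * \<bar>h\<bar>"
          by (simp add: abs_mult[symmetric] algebra_simps)
        also have "\<dots> \<le> e * \<bar>h\<bar>"
          using bound[OF \<open>x \<in> S\<close>, of n] elim by (intro mult_right_mono) auto
        finally show "norm (D n x * h - G x * h) \<le> e * norm h" by simp
      qed
    qed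
  qed
  have frlim: "(\<lambda>n. fr (rj n) x) \<longlonglongrightarrow> Sn 2 x" for x
  proof -
    have "(\<lambda>n. fr (rj n) x) \<longlonglongrightarrow> fr 1 x"
      by (rule continuous_on_tendsto_compose[OF fr_cont rj_lim]) (use rj0 in \<open>auto intro!: always_eventually\<close>)
    then show ?thesis by (simp add: fr_1)
  qed
  have "\<exists>g. \<forall>x\<in>S. (\<lambda>n. fr (rj n) x) \<longlonglongrightarrow> g x \<and> (g has_derivative (*) (G x)) (at x within S)"
    by (rule has_derivative_sequence[OF _ derf nle yS frlim[of y]]) (simp add: S_def)
  then obtain g where g: "\<And>x. x \<in> S \<Longrightarrow> (\<lambda>n. fr (rj n) x) \<longlonglongrightarrow> g x \<and> (g has_derivative (*) (G x)) (at x within S)"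
    by blast
  have gS: "x \<in> S \<Longrightarrow> Sn 2 x = g x" for x
    using g[of x] frlim[of x] LIMSEQ_unique by blast
  have "(Sn 2 has_derivative (*) (G y)) (at y within S)"
    by (rule has_derivative_transform[OF yS gS]) (use g yS in auto)
  moreover have "at y within S = at y"
    using ab unfolding S_def by (intro at_within_interior) auto
  ultimately show ?thesis unfolding G_def has_field_derivative_def by simp
qed

definition Gf :: "nat \<Rightarrow> real \<Rightarrow> real" where
  "Gf i y = (if i = 0 then ln (2 * sin (pi * y))
             else if even i then (-1) ^ (i div 2 + 1) * Cs (i + 1) y / (2 * pi) ^ i
             else (-1) ^ (i div 2 + 1) * Sn (i + 1) y / (2 * pi) ^ i)"

lemma Gf_0: "Gf 0 y = ln (2 * sin (pi * y))" by (simp add: Gf_def)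

lemma Gf_odd: "Gf (2 * p + 1) y = (-1) ^ (p + 1) * Sn (2 * p + 2) y / (2 * pi) ^ (2 * p + 1)"
  by (simp add: Gf_def)

lemma Gf_even: "Gf (2 * p + 2) y = (-1) ^ p * Cs (2 * p + 3) y / (2 * pi) ^ (2 * p + 2)"
proof -
  have ev: "even (2 * p + 2)" by simp
  have ne: "(2 * p + 2 = 0) = False" by simp
  have dv: "(2 * p + 2) div 2 + 1 = p + 2" by simp
  have ix: "2 * p + 2 + 1 = 2 * p + 3" by simp
  have "Gf (2 * p + 2) y = (-1) ^ ((2 * p + 2) div 2 + 1) * Cs (2 * p + 2 + 1) y / (2 * pi) ^ (2 * p + 2)"
    unfolding Gf_def using ev by (simp only: ne if_False if_True)
  also have "\<dots> = (-1) ^ (p + 2) * Cs (2 * p + 3) y / (2 * pi) ^ (2 * p + 2)" by (simp only: dv ix)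
  finally show ?thesis by simp
qed

lemma nat_cases_parity:
  fixes i :: nat
  obtains (zero) "i = 0" | (odd) p where "i = 2 * p + 1" | (even) p where "i = 2 * p + 2"
proof -
  consider "even i" | "odd i" by blast
  then show ?thesis
  proof cases
    case 1
    then obtain q where q: "i = 2 * q" by (auto elim: evenE)
    show ?thesis
    proof (cases q)
      case 0 then show ?thesis using q zero by simp
    next
      case (Suc p) then show ?thesis using q even[of p] by simp
    qed
  next
    case 2
    then obtain p where "i = 2 * p + 1" by (auto elim: oddE)
    then show ?thesis using odd by blast
  qed
qed

lemma Gf_deriv:
  assumes y: "0 < y" "y < 1"
  shows "(Gf (Suc i) has_real_derivative Gf i y) (at y)"
proof (cases i rule: nat_cases_parity)
  case zero
  have e: "Gf (Suc 0) = (\<lambda>y. (-1) * Sn 2 y / (2 * pi))"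
    by (intro ext) (simp add: Gf_def numeral_2_eq_2)
  have "((\<lambda>y. (-1) * Sn 2 y / (2 * pi)) has_real_derivative (-1) * (- 2 * pi * ln (2 * sin (pi * y))) / (2 * pi)) (at y)"
    by (intro DERIV_cdivide DERIV_cmult deriv_Sn2 y)
  then show ?thesis using zero e by (simp add: Gf_0)
next
  case (odd p)
  have si: "Suc i = 2 * p + 2" using odd by simp
  have e: "Gf (Suc i) = (\<lambda>y. (-1) ^ p * Cs (2 * p + 3) y / (2 * pi) ^ (2 * p + 2))"
    by (intro ext) (simp only: si Gf_even)
  have "((\<lambda>y. (-1) ^ p * Cs (2 * p + 3) y / (2 * pi) ^ (2 * p + 2)) has_real_derivative
          (-1) ^ p * (- 2 * pi * Sn (2 * p + 3 - 1) y) / (2 * pi) ^ (2 * p + 2)) (at y)"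
    by (intro DERIV_cdivide DERIV_cmult deriv_Cs) simp
  also have "(-1) ^ p * (- 2 * pi * Sn (2 * p + 3 - 1) y) / (2 * pi) ^ (2 * p + 2) = Gf i y"
  proof -
    have "(2 * pi) ^ (2 * p + 2) = (2 * pi) * (2 * pi) ^ (2 * p + 1)" by simp
    moreover have "2 * p + 3 - 1 = 2 * p + 2" by simp
    ultimately show ?thesis unfolding odd Gf_odd by (simp add: field_simps)
  qed
  finally show ?thesis using e by simp
next
  case (even p)
  have si: "Suc i = 2 * (p + 1) + 1" using even by simp
  have ix: "2 * (p + 1) + 2 = 2 * p + 4" "2 * (p + 1) + 1 = 2 * p + 3" "p + 1 + 1 = p + 2" by simp_all
  have e: "Gf (Suc i) = (\<lambda>y. (-1) ^ (p + 2) * Sn (2 * p + 4) y / (2 * pi) ^ (2 * p + 3))"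
    by (intro ext, subst si, subst Gf_odd, simp only: ix)
  have "((\<lambda>y. (-1) ^ (p + 2) * Sn (2 * p + 4) y / (2 * pi) ^ (2 * p + 3)) has_real_derivative
          (-1) ^ (p + 2) * (2 * pi * Cs (2 * p + 4 - 1) y) / (2 * pi) ^ (2 * p + 3)) (at y)"
    by (intro DERIV_cdivide DERIV_cmult deriv_Sn) simp
  also have "(-1) ^ (p + 2) * (2 * pi * Cs (2 * p + 4 - 1) y) / (2 * pi) ^ (2 * p + 3) = Gf i y"
  proof -
    have "2 * p + 3 = Suc (2 * p + 2)" by simp
    then have "(2 * pi) ^ (2 * p + 3) = (2 * pi) * (2 * pi) ^ (2 * p + 2)" by (simp only: power_Suc)
    moreover have "2 * p + 4 - 1 = 2 * p + 3" by simp
    ultimately show ?thesis unfolding even Gf_even by (simp add: field_simps)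
  qed
  finally show ?thesis using e by simp
qed

lemma Gf_cont: "continuous_on UNIV (Gf (Suc i))"
proof (cases i rule: nat_cases_parity)
  case zero
  have e: "Gf (Suc i) = (\<lambda>y. (-1) * Sn 2 y / (2 * pi))"
    using zero by (intro ext) (simp add: Gf_def numeral_2_eq_2)
  show ?thesis unfolding e by (intro continuous_intros continuous_on_compose2[OF cont_Sn[of 2]]) auto
next
  case (odd p)
  have si: "Suc i = 2 * p + 2" using odd by simp
  have e: "Gf (Suc i) = (\<lambda>y. (-1) ^ p * Cs (2 * p + 3) y / (2 * pi) ^ (2 * p + 2))"
    by (intro ext) (simp only: si Gf_even)
  show ?thesis unfolding e by (intro continuous_intros continuous_on_compose2[OF cont_Cs[of "2*p+3"]]) auto
next
  case (even p)
  have si: "Suc i = 2 * (p + 1) + 1" using even by simp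
  have ix: "2 * (p + 1) + 2 = 2 * p + 4" "2 * (p + 1) + 1 = 2 * p + 3" "p + 1 + 1 = p + 2" by simp_all
  have e: "Gf (Suc i) = (\<lambda>y. (-1) ^ (p + 2) * Sn (2 * p + 4) y / (2 * pi) ^ (2 * p + 3))"
    by (intro ext, subst si, subst Gf_odd, simp only: ix)
  show ?thesis unfolding e by (intro continuous_intros continuous_on_compose2[OF cont_Sn[of "2*p+4"]]) auto
qed

lemma Gf_ends: "Gf (Suc i) 1 = Gf (Suc i) 0"
proof (cases i rule: nat_cases_parity)
  case zero then show ?thesis using Gf_odd[of 0] by (simp add: Sn_0 Sn_1)
next
  case (odd p)
  then have "Suc i = 2 * p + 2" by simp
  then show ?thesis using Gf_even[of p] by (simp add: Cs_0 Cs_1)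
next
  case (even p)
  then have "Suc i = 2 * (p + 1) + 1" by simp
  then show ?thesis using Gf_odd[of "p + 1"] by (simp add: Sn_0 Sn_1)
qed

lemma Gf_odd_1: "Gf (2 * p + 1) 1 = 0" using Gf_odd[of p 1] Sn_1 by simp

lemma Gf_even_1: "Gf (2 * p + 2) 1 = (-1) ^ p * zeta (real (2 * p + 3)) / (2 * pi) ^ (2 * p + 2)"
  using Gf_even[of p 1] Cs_1[of "2*p+3"] by simp

fun K :: "nat \<Rightarrow> nat \<Rightarrow> real \<Rightarrow> real" where
  "K 0 i y = Gf (Suc i) y"
| "K (Suc m) i y = y ^ Suc m * Gf (Suc i) y - real (Suc m) * K m (Suc i) y"

lemma K_deriv:
  assumes y: "0 < y" "y < 1"
  shows "(K m i has_real_derivative y ^ m * Gf i y) (at y)"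
proof (induction m arbitrary: i)
  case 0
  have e: "K 0 i = Gf (Suc i)" by (rule ext) simp
  show ?case unfolding e using Gf_deriv[OF y] by simp
next
  case (Suc m)
  have e: "K (Suc m) i = (\<lambda>y. y ^ Suc m * Gf (Suc i) y - real (Suc m) * K m (Suc i) y)" by (rule ext) simp
  have d1: "((\<lambda>y. y ^ Suc m) has_real_derivative real (Suc m) * y ^ m) (at y)"
    using DERIV_pow[of "Suc m" y] by simp
  have "((\<lambda>y. y ^ Suc m * Gf (Suc i) y - real (Suc m) * K m (Suc i) y) has_real_derivative
         (real (Suc m) * y ^ m * Gf (Suc i) y + Gf i y * y ^ Suc m) - real (Suc m) * (y ^ m * Gf (Suc i) y)) (at y)"
    by (intro DERIV_diff DERIV_mult d1 DERIV_cmult Suc.IH Gf_deriv[OF y])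
  then show ?case unfolding e by (simp add: algebra_simps)
qed

lemma K_cont: "continuous_on UNIV (K m i)"
proof (induction m arbitrary: i)
  case 0
  have e: "K 0 i = Gf (Suc i)" by (rule ext) simp
  show ?case unfolding e by (rule Gf_cont)
next
  case (Suc m)
  have e: "K (Suc m) i = (\<lambda>y. y ^ Suc m * Gf (Suc i) y - real (Suc m) * K m (Suc i) y)" by (rule ext) simp
  show ?case unfolding e
    by (intro continuous_intros continuous_on_compose2[OF Gf_cont] continuous_on_compose2[OF Suc.IH]) auto
qed

lemma K_diff: "K m i 1 - K m i 0 = (\<Sum>l<m. (-1) ^ l * (fact m / fact (m - l)) * Gf (i + l + 1) 1)"
proof (induction m arbitrary: i)
  case 0
  show ?case by (simp only: K.simps Gf_ends lessThan_0 sum.empty diff_self)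
next
  case (Suc m)
  have "K (Suc m) i 1 - K (Suc m) i 0 = Gf (Suc i) 1 - real (Suc m) * (K m (Suc i) 1 - K m (Suc i) 0)"
    by (simp add: algebra_simps)
  also have "\<dots> = Gf (Suc i) 1 - real (Suc m) * (\<Sum>l<m. (-1) ^ l * (fact m / fact (m - l)) * Gf (Suc i + l + 1) 1)"
    by (simp only: Suc.IH)
  also have "\<dots> = Gf (Suc i) 1 + (\<Sum>l<m. - (real (Suc m) * ((-1) ^ l * (fact m / fact (m - l)) * Gf (Suc i + l + 1) 1)))"
    by (simp add: sum_distrib_left sum_negf)
  also have "(\<Sum>l<m. - (real (Suc m) * ((-1) ^ l * (fact m / fact (m - l)) * Gf (Suc i + l + 1) 1)))
      = (\<Sum>l<m. (-1) ^ Suc l * (fact (Suc m) / fact (Suc m - Suc l)) * Gf (i + Suc l + 1) 1)"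
    by (rule sum.cong) (simp_all add: fact_Suc field_simps)
  also have "Gf (Suc i) 1 + (\<Sum>l<m. (-1) ^ Suc l * (fact (Suc m) / fact (Suc m - Suc l)) * Gf (i + Suc l + 1) 1)
     = (\<Sum>l<Suc m. (-1) ^ l * (fact (Suc m) / fact (Suc m - l)) * Gf (i + l + 1) 1)"
    by (subst sum.lessThan_Suc_shift) simp
  finally show ?case .
qed

lemma tlnt: "((\<lambda>t::real. t * ln (2 * pi * t)) \<longlongrightarrow> 0) (at_right 0)"
  by real_asymp

lemma E_lim:
  assumes q: "q \<ge> 1"
  shows "((\<lambda>t::real. t ^ q * ln (2 * pi * t) / real q - t ^ q / (real q)\<^sup>2) \<longlongrightarrow> 0) (at_right 0)"
proof -
  obtain q' where q': "q = Suc q'" using q by (cases q) auto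
  have "((\<lambda>t::real. t ^ q' * (t * ln (2 * pi * t)) / real q - t * t ^ q' / (real q)\<^sup>2) \<longlongrightarrow>
          0 ^ q' * 0 / real q - 0 * 0 ^ q' / (real q)\<^sup>2) (at_right 0)"
    using q by (intro tendsto_intros tlnt) auto
  then show ?thesis unfolding q' by (simp add: mult_ac)
qed

lemma P_main:
  fixes q :: nat
  assumes q: "q \<ge> 1"
  shows "(\<lambda>i. zeta (real (2 * Suc i)) / (real (Suc i) * (2 * real (Suc i) + real q)))
           sums (ln (2 * pi) / real q - 1 / (real q)\<^sup>2 - (K (q - 1) 0 1 - K (q - 1) 0 0))"
proof -
  obtain q' where q': "q = Suc q'" using q by (cases q) auto
  define c where "c i = zeta (real (2 * Suc i)) / (real (Suc i) * (2 * real (Suc i) + real q))" for i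
  define e where "e i = 2 * Suc i + q" for i
  define P where "P y = (\<Sum>i. c i * y ^ e i)" for y :: real
  define Z where "Z = zeta 2"
  have zb: "0 \<le> zeta (real (2 * Suc i))" "zeta (real (2 * Suc i)) \<le> Z" for i
    unfolding Z_def using zeta_nat_bounds[of "2 * Suc i"] by auto
  have Z0: "0 \<le> Z" using zb(1)[of 0] zb(2)[of 0] by linarith
  have c0: "0 \<le> c i" for i unfolding c_def using zb(1)[of i] by simp
  have cb: "c i \<le> Z * (1 / real (Suc i) ^ 2)" for i
  proof -
    have "real (Suc i) ^ 2 \<le> real (Suc i) * (2 * real (Suc i) + real q)"
      by (simp add: power2_eq_square mult_left_mono)
    then have "zeta (real (2 * Suc i)) / (real (Suc i) * (2 * real (Suc i) + real q)) \<le> Z / real (Suc i) ^ 2"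
      using zb[of i] Z0 by (intro frac_le) auto
    then show ?thesis unfolding c_def by simp
  qed
  have csum: "summable c"
    by (rule summable_comparison_test[OF _ summable_mult[OF summable_inv_pow[of 2]]]) (use c0 cb in auto)
  have e1: "e i \<ge> 1" for i unfolding e_def by simp
  have ceq: "c i * real (e i) = zeta (real (2 * Suc i)) / real (Suc i)" for i
  proof -
    have re: "real (e i) = 2 * real (Suc i) + real q" unfolding e_def by simp
    have h: "a / (s * b) * b = a / s" if "b \<noteq> 0" for a b s :: real
      using that by (cases "s = 0") (simp_all add: field_simps)
    have "2 * real (Suc i) + real q \<noteq> 0" by (simp add: add_pos_nonneg)
    from h[OF this] show ?thesis unfolding c_def re .
  qed
  have ulP: "uniform_limit {0..1} (\<lambda>n y. \<Sum>i<n. c i * y ^ e i) P sequentially"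
    unfolding P_def[abs_def]
  proof (rule Weierstrass_m_test[OF _ csum])
    fix n and y :: real assume "y \<in> {0..1}"
    then have "\<bar>y\<bar> ^ e n \<le> 1" by (intro power_le_one) auto
    then have "c n * \<bar>y\<bar> ^ e n \<le> c n * 1" using c0[of n] by (intro mult_left_mono) auto
    then show "norm (c n * y ^ e n) \<le> c n" using c0[of n] by (simp add: abs_mult power_abs)
  qed
  have Pcont: "continuous_on {0..1} P"
    apply (rule uniform_limit_theorem[OF _ ulP])
    apply (intro always_eventually allI continuous_intros)
    by auto
  have z0: "(\<lambda>i. c i * 0 ^ e i) = (\<lambda>i. 0)" by (intro ext) (simp add: e_def)
  have P0: "P 0 = 0" unfolding P_def z0 by simp
  have P1: "c sums P 1" unfolding P_def using csum by (simp add: sums_iff)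
  have Pder: "(P has_real_derivative y ^ (q - 1) * (ln (2 * pi * y) - ln (2 * sin (pi * y)))) (at y)"
    if y: "0 < y" "y < 1" for y
  proof -
    define t where "t = (1 + y) / 2"
    have t: "y < t" "t < 1" "0 < t" unfolding t_def using y by auto
    define f where "f i x = c i * x ^ e i" for i and x :: real
    define f' where "f' i x = c i * (real (e i) * x ^ (e i - 1))" for i and x :: real
    have der: "(f i has_field_derivative f' i x) (at x within {-t..t})" for i x
      unfolding f_def f'_def by (auto intro!: derivative_eq_intros)
    have sM: "summable (\<lambda>i. Z * t ^ i)" using t by (intro summable_mult summable_geometric) auto
    have uc: "uniformly_convergent_on {-t..t} (\<lambda>n x. \<Sum>i<n. f' i x)"
    proof (rule Weierstrass_m_test'[OF _ sM])
      fix n and x :: real assume x: "x \<in> {-t..t}"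
      have ce: "c n * real (e n) = zeta (real (2 * Suc n)) / real (Suc n)" by (rule ceq)
      have "\<bar>x\<bar> ^ (e n - 1) \<le> t ^ (e n - 1)" using x by (intro power_mono) auto
      also have "\<dots> \<le> t ^ n" using t by (intro power_decreasing) (auto simp: e_def)
      finally have xb: "\<bar>x\<bar> ^ (e n - 1) \<le> t ^ n" .
      have "zeta (real (2 * Suc n)) / real (Suc n) \<le> Z"
      proof -
        have "Z * 1 \<le> Z * (1 + real n)" using Z0 by (intro mult_left_mono) auto
        then show ?thesis using zb[of n] by (simp add: divide_le_eq)
      qed
      then have "norm (f' n x) = zeta (real (2 * Suc n)) / real (Suc n) * \<bar>x\<bar> ^ (e n - 1)"
        unfolding f'_def using zb[of n] c0[of n] ce
        by (simp add: abs_mult power_abs mult.assoc[symmetric])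
      also have "\<dots> \<le> Z * t ^ n"
        using zb[of n] xb \<open>zeta (real (2 * Suc n)) / real (Suc n) \<le> Z\<close> Z0
        by (intro mult_mono) auto
      finally show "norm (f' n x) \<le> Z * t ^ n" .
    qed
    have sm0: "summable (\<lambda>n. f n 0)" unfolding f_def z0 by simp
    have yint: "y \<in> interior {-t..t}" using t y by auto
    have D: "((\<lambda>x. \<Sum>n. f n x) has_field_derivative (\<Sum>n. f' n y)) (at y)"
      by (rule has_field_derivative_series'(2)[OF convex_closed_interval(1) der uc _ sm0 yint]) (use t in auto)
    have fP: "(\<lambda>x. \<Sum>n. f n x) = P" unfolding f_def P_def by (rule ext) simp
    have "(\<lambda>i. y ^ (q - 1) * (zeta (real (2 * Suc i)) * y ^ (2 * Suc i) / real (Suc i)))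
             sums (y ^ (q - 1) * (ln (2 * pi * y) - ln (2 * sin (pi * y))))"
      by (rule sums_mult, rule F_sums[OF y])
    moreover have "f' i y = y ^ (q - 1) * (zeta (real (2 * Suc i)) * y ^ (2 * Suc i) / real (Suc i))" for i
    proof -
      have ce: "c i * real (e i) = zeta (real (2 * Suc i)) / real (Suc i)" by (rule ceq)
      have "e i - 1 = 2 * Suc i + (q - 1)" unfolding e_def using q by simp
      then have pw: "y ^ (e i - 1) = y ^ (2 * Suc i) * y ^ (q - 1)" by (simp add: power_add)
      have "f' i y = (c i * real (e i)) * y ^ (e i - 1)" unfolding f'_def by (simp only: mult.assoc)
      also have "\<dots> = zeta (real (2 * Suc i)) / real (Suc i) * (y ^ (2 * Suc i) * y ^ (q - 1))"
        by (simp only: ce pw)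
      also have "\<dots> = y ^ (q - 1) * (zeta (real (2 * Suc i)) * y ^ (2 * Suc i) / real (Suc i))"
        by (simp add: field_simps)
      finally show ?thesis .
    qed
    ultimately have "(\<Sum>n. f' n y) = y ^ (q - 1) * (ln (2 * pi * y) - ln (2 * sin (pi * y)))"
      by (simp add: sums_iff)
    with D fP show ?thesis by simp
  qed
  define E where "E y = y ^ q * ln (2 * pi * y) / real q - y ^ q / (real q)\<^sup>2" for y :: real
  have Eder: "(E has_real_derivative y ^ (q - 1) * ln (2 * pi * y)) (at y)" if y: "0 < y" for y
  proof -
    have d_ln: "((\<lambda>y. ln (2 * pi * y)) has_real_derivative 1 / y) (at y)"
      using y by (auto intro!: derivative_eq_intros simp: field_simps)
    have d_pow: "((\<lambda>y. y ^ q) has_real_derivative real q * y ^ (q - 1)) (at y)"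
      using DERIV_pow[of q y] by simp
    have "(E has_real_derivative
           ((real q * y ^ (q - 1)) * ln (2 * pi * y) + (1 / y) * y ^ q) / real q
            - (real q * y ^ (q - 1)) / (real q)\<^sup>2) (at y)"
      unfolding E_def[abs_def] by (intro DERIV_diff DERIV_cdivide DERIV_mult d_ln d_pow)
    also have "((real q * y ^ (q - 1)) * ln (2 * pi * y) + (1 / y) * y ^ q) / real q
            - (real q * y ^ (q - 1)) / (real q)\<^sup>2 = y ^ (q - 1) * ln (2 * pi * y)"
    proof -
      have a: "(1 / y) * y ^ q = y ^ (q - 1)" unfolding q' using y by simp
      have qpos: "real q > 0" using q by simp
      show ?thesis unfolding a using qpos by (simp add: field_simps power2_eq_square)
    qed
    finally show ?thesis .
  qed
  define H where "H y = P y + K (q - 1) 0 y - E y" for y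
  have Hder: "(H has_real_derivative 0) (at y)" if y: "0 < y" "y < 1" for y
  proof -
    have "(H has_real_derivative
           y ^ (q - 1) * (ln (2 * pi * y) - ln (2 * sin (pi * y))) + y ^ (q - 1) * Gf 0 y - y ^ (q - 1) * ln (2 * pi * y)) (at y)"
      unfolding H_def[abs_def] by (intro DERIV_diff DERIV_add Pder K_deriv Eder y)
    then show ?thesis by (simp add: Gf_0 algebra_simps)
  qed
  have Econt: "continuous_on {t..1} E" if "0 < t" for t
    unfolding E_def[abs_def] using that pi_gt_zero q
    by (intro continuous_intros) (auto simp: mult_pos_pos)
  have Hconst: "H 1 = H t" if t: "0 < t" "t < 1" for t
  proof (rule DERIV_isconst_end[OF t(2)])
    show "continuous_on {t..1} H"
      unfolding H_def[abs_def] using t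
      by (intro continuous_intros continuous_on_subset[OF Pcont] continuous_on_subset[OF K_cont] Econt) auto
    show "\<And>x. t < x \<Longrightarrow> x < 1 \<Longrightarrow> DERIV H x :> 0" using t by (intro Hder) auto
  qed
  have Hlim: "(H \<longlongrightarrow> P 0 + K (q - 1) 0 0 - 0) (at_right 0)"
  proof -
    have "(P \<longlongrightarrow> P 0) (at_right 0)" by (rule continuous_on_Icc_at_rightD[OF Pcont]) simp
    moreover have "(K (q - 1) 0 \<longlongrightarrow> K (q - 1) 0 0) (at_right 0)"
    proof -
      have "continuous_on {0..1} (K (q - 1) 0)" by (rule continuous_on_subset[OF K_cont]) auto
      then show ?thesis by (rule continuous_on_Icc_at_rightD) simp
    qed
    moreover have "(E \<longlongrightarrow> 0) (at_right 0)" unfolding E_def[abs_def] by (rule E_lim[OF q])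
    ultimately show ?thesis unfolding H_def[abs_def] by (intro tendsto_intros)
  qed
  have ev: "\<forall>\<^sub>F x in at_right 0. H 1 = H x"
    unfolding eventually_at_right[OF zero_less_one] using Hconst by (intro exI[of _ 1]) auto
  have HH: "(H \<longlongrightarrow> H 1) (at_right 0)"
    by (rule Lim_transform_eventually[OF tendsto_const ev])
  have "H 1 = P 0 + K (q - 1) 0 0 - 0"
    using tendsto_unique[OF _ HH Hlim] by simp
  then have H1: "H 1 = K (q - 1) 0 0" using P0 by simp
  have E1: "E 1 = ln (2 * pi) / real q - 1 / (real q)\<^sup>2" unfolding E_def by simp
  have "P 1 = ln (2 * pi) / real q - 1 / (real q)\<^sup>2 - (K (q - 1) 0 1 - K (q - 1) 0 0)"
    using H1 E1 unfolding H_def by simp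
  with P1 show ?thesis unfolding c_def by simp
qed

lemma sum_pairs: "(\<Sum>l<2 * N. g l) = (\<Sum>p<N. g (2 * p) + g (2 * p + 1))" for g :: "nat \<Rightarrow> real"
  by (induction N) (simp_all add: add.assoc)

lemma D_formula:
  assumes m: "m = 2 * N \<or> m = 2 * N + 1"
  shows "K m 0 1 - K m 0 0 = fact m * (\<Sum>j = 1..N. (-1) ^ j * zeta (2 * real j + 1) / ((2 * pi) ^ (2 * j) * fact (m + 1 - 2 * j)))"
proof -
  define g where "g l = (-1) ^ l * (fact m / fact (m - l)) * Gf (l + 1) 1" for l
  define h where "h j = (-1) ^ j * zeta (2 * real j + 1) / ((2 * pi) ^ (2 * j) * fact (m + 1 - 2 * j))" for j
  have KD: "K m 0 1 - K m 0 0 = (\<Sum>l<m. g l)" unfolding K_diff g_def by simp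
  have g_even: "g (2 * p) = 0" for p unfolding g_def using Gf_odd_1[of p] by simp
  have g_odd: "g (2 * p + 1) = fact m * h (p + 1)" if "p < N" for p
  proof -
    have mp: "m - (2 * p + 1) = m + 1 - 2 * (p + 1)" using m that by auto
    have "g (2 * p + 1) = (-1) ^ (2 * p + 1) * (fact m / fact (m + 1 - 2 * (p + 1))) * Gf (2 * p + 2) 1"
      unfolding g_def mp by (simp add: add.assoc)
    also have "\<dots> = (-1) ^ (2 * p + 1) * (fact m / fact (m + 1 - 2 * (p + 1))) *
        ((-1) ^ p * zeta (real (2 * p + 3)) / (2 * pi) ^ (2 * p + 2))"
      by (simp only: Gf_even_1)
    also have "\<dots> = fact m * h (p + 1)"
    proof -
      have z: "zeta (real (2 * p + 3)) = zeta (2 * real (p + 1) + 1)" by (simp add: add.commute)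
      have pw: "(2 * pi) ^ (2 * p + 2) = (2 * pi) ^ (2 * (p + 1))" by simp
      have s: "(-1::real) ^ (2 * p + 1) * (-1) ^ p = (-1) ^ (p + 1)"
        by (simp add: power_add)
      show ?thesis unfolding h_def z pw using s by (simp add: field_simps)
    qed
    finally show ?thesis .
  qed
  have S: "(\<Sum>l<2 * N. g l) = fact m * (\<Sum>j = 1..N. h j)"
  proof -
    have "(\<Sum>l<2 * N. g l) = (\<Sum>p<N. g (2 * p) + g (2 * p + 1))" by (rule sum_pairs)
    also have "\<dots> = (\<Sum>p<N. fact m * h (Suc p))"
      by (rule sum.cong) (use g_even g_odd in auto)
    also have "\<dots> = (\<Sum>j = 1..N. fact m * h j)" by (rule sum_bounds_lt_plus1)
    also have "\<dots> = fact m * (\<Sum>j = 1..N. h j)" by (simp add: sum_distrib_left)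
    finally show ?thesis .
  qed
  from m show ?thesis
  proof
    assume "m = 2 * N"
    then show ?thesis using KD S unfolding h_def by simp
  next
    assume m1: "m = 2 * N + 1"
    have "(\<Sum>l<m. g l) = (\<Sum>l<2 * N. g l) + g (2 * N)" unfolding m1 by simp
    then show ?thesis using KD S g_even[of N] unfolding h_def by simp
  qed
qed

theorem corollary5:
  fixes n :: nat
  assumes "n \<ge> 1"
  shows "(\<lambda>i. let k = Suc i in zeta (2 * real k) / (real k * (real k + real n)))
           sums (- 1 / (2 * (real n)^2) + ln (2 * pi) / real n
                 - 2 * fact (2*n - 1) * (\<Sum>j = 1..n-1. (-1)^j * zeta (2 * real j + 1)
                        / ((2 * pi)^(2*j) * fact (2*n - 2*j))))
     \<and> (\<lambda>i. let k = Suc i in zeta (2 * real k) / (real k * (2 * real k + 2 * real n - 1)))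
           sums (- 1 / (2 * real n - 1)^2 + ln (2 * pi) / (2 * real n - 1)
                 - fact (2*n - 2) * (\<Sum>j = 1..n-1. (-1)^j * zeta (2 * real j + 1)
                        / ((2 * pi)^(2*j) * fact (2*n - 2*j - 1))))"
proof -
  obtain N where N: "n = Suc N" using assms by (cases n) auto
  have nN: "n - 1 = N" using N by simp
  define S1 where "S1 = (\<Sum>j = 1..n-1. (-1)^j * zeta (2 * real j + 1) / ((2 * pi)^(2*j) * fact (2*n - 2*j)))"
  define S2 where "S2 = (\<Sum>j = 1..n-1. (-1)^j * zeta (2 * real j + 1) / ((2 * pi)^(2*j) * fact (2*n - 2*j - 1)))"
  have A: "(\<lambda>i. zeta (real (2 * Suc i)) / (real (Suc i) * (2 * real (Suc i) + real (2 * n))))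
       sums (ln (2 * pi) / real (2 * n) - 1 / (real (2 * n))\<^sup>2 - (K (2 * n - 1) 0 1 - K (2 * n - 1) 0 0))"
    by (rule P_main) (use assms in simp)
  have D1: "K (2 * n - 1) 0 1 - K (2 * n - 1) 0 0 = fact (2 * n - 1) * S1"
  proof -
    have "K (2 * n - 1) 0 1 - K (2 * n - 1) 0 0 = fact (2 * n - 1) *
        (\<Sum>j = 1..N. (-1) ^ j * zeta (2 * real j + 1) / ((2 * pi) ^ (2 * j) * fact (2 * n - 1 + 1 - 2 * j)))"
      by (rule D_formula) (simp add: N)
    also have "2 * n - 1 + 1 = 2 * n" using assms by simp
    finally show ?thesis unfolding S1_def nN .
  qed
  have B: "(\<lambda>i. zeta (real (2 * Suc i)) / (real (Suc i) * (2 * real (Suc i) + real (2 * n - 1))))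
       sums (ln (2 * pi) / real (2 * n - 1) - 1 / (real (2 * n - 1))\<^sup>2 - (K (2 * n - 1 - 1) 0 1 - K (2 * n - 1 - 1) 0 0))"
    by (rule P_main) (use assms in simp)
  have D2: "K (2 * n - 1 - 1) 0 1 - K (2 * n - 1 - 1) 0 0 = fact (2 * n - 2) * S2"
  proof -
    have e: "2 * n - 1 - 1 = 2 * n - 2" by simp
    have "K (2 * n - 2) 0 1 - K (2 * n - 2) 0 0 = fact (2 * n - 2) *
        (\<Sum>j = 1..N. (-1) ^ j * zeta (2 * real j + 1) / ((2 * pi) ^ (2 * j) * fact (2 * n - 2 + 1 - 2 * j)))"
      by (rule D_formula) (simp add: N)
    also have "(\<Sum>j = 1..N. (-1) ^ j * zeta (2 * real j + 1) / ((2 * pi) ^ (2 * j) * fact (2 * n - 2 + 1 - 2 * j)))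
        = S2" unfolding S2_def nN
      by (rule sum.cong) (auto simp: N)
    finally show ?thesis unfolding e .
  qed
  have rn: "real (2 * n - 1) = 2 * real n - 1" using assms by (simp add: of_nat_diff)
  have part1: "(\<lambda>i. let k = Suc i in zeta (2 * real k) / (real k * (real k + real n)))
           sums (- 1 / (2 * (real n)^2) + ln (2 * pi) / real n - 2 * fact (2*n - 1) * S1)"
  proof -
    from sums_mult[OF A, of 2]
    have "(\<lambda>i. 2 * (zeta (real (2 * Suc i)) / (real (Suc i) * (2 * real (Suc i) + real (2 * n)))))
        sums (2 * (ln (2 * pi) / real (2 * n) - 1 / (real (2 * n))\<^sup>2 - fact (2 * n - 1) * S1))"
      unfolding D1 .
    moreover have "(\<lambda>i. 2 * (zeta (real (2 * Suc i)) / (real (Suc i) * (2 * real (Suc i) + real (2 * n)))))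
        = (\<lambda>i. let k = Suc i in zeta (2 * real k) / (real k * (real k + real n)))"
    proof
      fix i
      have "real (2 * Suc i) = 2 * real (Suc i)" by simp
      moreover have "real (Suc i) * (2 * real (Suc i) + real (2 * n)) = 2 * (real (Suc i) * (real (Suc i) + real n))"
        by (simp add: algebra_simps)
      ultimately show "2 * (zeta (real (2 * Suc i)) / (real (Suc i) * (2 * real (Suc i) + real (2 * n))))
        = (let k = Suc i in zeta (2 * real k) / (real k * (real k + real n)))"
        unfolding Let_def by (simp only:) simp
    qed
    moreover have "2 * (ln (2 * pi) / real (2 * n) - 1 / (real (2 * n))\<^sup>2 - fact (2 * n - 1) * S1)
        = - 1 / (2 * (real n)^2) + ln (2 * pi) / real n - 2 * fact (2*n - 1) * S1"
      using assms by (simp add: field_simps power2_eq_square)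
    ultimately show ?thesis by metis
  qed
  have part2: "(\<lambda>i. let k = Suc i in zeta (2 * real k) / (real k * (2 * real k + 2 * real n - 1)))
           sums (- 1 / (2 * real n - 1)^2 + ln (2 * pi) / (2 * real n - 1) - fact (2*n - 2) * S2)"
  proof -
    have "(\<lambda>i. zeta (real (2 * Suc i)) / (real (Suc i) * (2 * real (Suc i) + real (2 * n - 1))))
        = (\<lambda>i. let k = Suc i in zeta (2 * real k) / (real k * (2 * real k + 2 * real n - 1)))"
      unfolding Let_def rn by (intro ext) (simp add: algebra_simps)
    moreover have "ln (2 * pi) / real (2 * n - 1) - 1 / (real (2 * n - 1))\<^sup>2 - fact (2 * n - 2) * S2
        = - 1 / (2 * real n - 1)^2 + ln (2 * pi) / (2 * real n - 1) - fact (2*n - 2) * S2"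
      unfolding rn by simp
    ultimately show ?thesis using B unfolding D2 by simp
  qed
  show ?thesis using part1 part2 unfolding S1_def S2_def by blast
qed

end
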